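(* Let $\mathrm{cleaf}_3:\mathbb{R}\to\mathbb{R}$ be the leaf function of basis $3$. For every real $l$, writing $c=\mathrm{cleaf}_3(l)$, $$\Bigl(\mathrm{cleaf}_3\Bigl(\frac l2\Bigr)\Bigr)^2=\frac{c^2-1}{4c^2+2}+\frac{\sqrt3\sqrt{1+c^2+c^4}}{2\sqrt{1+4c^2+4c^4}}+\frac{\sqrt3\,c\sqrt{-3-6c^2+2\sqrt3\,(1+2c^2)\sqrt{1+c^2+c^4}}}{2(1+2c^2)^{3/2}}.$$
   Context: For a natural number $n$, the leaf function $\mathrm{cleaf}_n:\mathbb{R}\to\mathbb{R}$ is the solution of $\frac{\mathrm{d}^2r}{\mathrm{d}l^2}=-n\,r^{2n-1}$ with $r(0)=1$, $r'(0)=0$. *)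

theory Defs
  imports "HOL-Analysis.Analysis"
begin

definition is_cleaf :: "nat \<Rightarrow> (real \<Rightarrow> real) \<Rightarrow> bool" where
  "is_cleaf n r \<longleftrightarrow> (\<exists>r'. (\<forall>l. (r has_real_derivative r' l) (at l)) \<and>
       (\<forall>l. (r' has_real_derivative (- real n * r l ^ (2 * n - 1))) (at l)) \<and>
       r 0 = 1 \<and> r' 0 = 0)"

definition cleaf :: "nat \<Rightarrow> real \<Rightarrow> real" where
  "cleaf n = (THE r. is_cleaf n r)"

end

theory Submission
  imports Defs
begin

lemma energy3:
  fixes f f' :: "real \<Rightarrow> real"
  assumes d1: "\<And>l. (f has_real_derivative f' l) (at l)"
    and d2: "\<And>l. (f' has_real_derivative (- 3 * f l ^ 5)) (at l)"
  shows "f' l ^ 2 + f l ^ 6 = f' 0 ^ 2 + f 0 ^ 6"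
proof -
  have "\<forall>x. ((\<lambda>l. f' l ^ 2 + f l ^ 6) has_real_derivative 0) (at x)"
  proof
    fix x
    show "((\<lambda>l. f' l ^ 2 + f l ^ 6) has_real_derivative 0) (at x)"
      by (rule derivative_eq_intros d1 d2 refl)+ (simp add: algebra_simps)
  qed
  then show ?thesis by (rule DERIV_isconst_all)
qed

lemma pow5_diff_bound:
  fixes x y B :: real
  assumes "\<bar>x\<bar> \<le> B" "\<bar>y\<bar> \<le> B"
  shows "\<bar>x ^ 5 - y ^ 5\<bar> \<le> 5 * B ^ 4 * \<bar>x - y\<bar>"
proof -
  have e: "x ^ 5 - y ^ 5 = (x - y) * (x^4 + x^3*y + x^2*y^2 + x*y^3 + y^4)"
    by (simp add: algebra_simps power2_eq_square power3_eq_cube power4_eq_xxxx power_def)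
  have B0: "0 \<le> B" using assms by linarith
  have h: "\<bar>x ^ i * y ^ j\<bar> \<le> B ^ (i + j)" for i j
    by (simp add: abs_mult power_abs power_add mult_mono' power_mono assms B0 zero_le_power)
  have h2: "- (B ^ (i + j)) \<le> x ^ i * y ^ j \<and> x ^ i * y ^ j \<le> B ^ (i + j)" for i j
    using h[of i j] by (simp add: abs_le_iff)
  have "\<bar>x^4 + x^3*y + x^2*y^2 + x*y^3 + y^4\<bar> \<le> 5 * B ^ 4"
    using h2[of 4 0] h2[of 3 1] h2[of 2 2] h2[of 1 3] h2[of 0 4] by (simp add: abs_le_iff)
  from mult_left_mono[OF this abs_ge_zero[of "x - y"]]
  show ?thesis unfolding e abs_mult by (simp add: algebra_simps)
qed

lemma bound_from_energy:
  fixes x y E :: real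
  assumes "y ^ 2 + x ^ 6 = E"
  shows "\<bar>x\<bar> \<le> 1 + \<bar>E\<bar>"
proof (cases "\<bar>x\<bar> \<le> 1")
  case False
  then have "\<bar>x\<bar> ^ 1 \<le> \<bar>x\<bar> ^ 6" by (intro power_increasing) auto
  moreover have "\<bar>x\<bar> ^ 6 = x ^ 6" by (simp add: power_abs[symmetric] )
  moreover have "x ^ 6 \<le> E" using assms by (smt (verit) zero_le_power2)
  ultimately show ?thesis by simp
qed simp

lemma ode3_unique:
  fixes f f' g g' :: "real \<Rightarrow> real"
  assumes f1: "\<And>l. (f has_real_derivative f' l) (at l)"
    and f2: "\<And>l. (f' has_real_derivative (- 3 * f l ^ 5)) (at l)"
    and g1: "\<And>l. (g has_real_derivative g' l) (at l)"
    and g2: "\<And>l. (g' has_real_derivative (- 3 * g l ^ 5)) (at l)"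
    and i1: "f 0 = g 0" and i2: "f' 0 = g' 0"
  shows "f t = g t"
proof -
  define E where "E = f' 0 ^ 2 + f 0 ^ 6"
  define B where "B = 1 + \<bar>E\<bar>"
  define K where "K = 1 + 15 * B ^ 4"
  have fB: "\<bar>f l\<bar> \<le> B" for l
    using bound_from_energy[OF energy3[OF f1 f2, of l]] by (simp add: E_def B_def)
  have gB: "\<bar>g l\<bar> \<le> B" for l
    using bound_from_energy[OF energy3[OF g1 g2, of l]] by (simp add: E_def B_def i1 i2)
  define w where "w l = (f l - g l) ^ 2 + (f' l - g' l) ^ 2" for l
  define w' where "w' l = 2 * (f l - g l) * (f' l - g' l)
       + 2 * (f' l - g' l) * (- 3 * f l ^ 5 - (- 3 * g l ^ 5))" for l
  have wd: "(w has_real_derivative w' l) (at l)" for l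
    unfolding w_def w'_def
    by (rule derivative_eq_intros f1 f2 g1 g2 refl)+ (simp add: algebra_simps)
  have w0: "w 0 = 0" by (simp add: w_def i1 i2)
  have wnn: "w l \<ge> 0" for l by (simp add: w_def)
  have wb: "\<bar>w' l\<bar> \<le> K * w l" for l
  proof -
    let ?d = "f l - g l" and ?e = "f' l - g' l"
    have p5: "\<bar>f l ^ 5 - g l ^ 5\<bar> \<le> 5 * B ^ 4 * \<bar>?d\<bar>"
      by (rule pow5_diff_bound[OF fB gB])
    have "\<bar>w' l\<bar> \<le> 2 * \<bar>?d\<bar> * \<bar>?e\<bar> + 6 * \<bar>?e\<bar> * \<bar>f l ^ 5 - g l ^ 5\<bar>"
    proof -
      have "w' l = 2 * ?d * ?e - 6 * ?e * (f l ^ 5 - g l ^ 5)" by (simp add: w'_def algebra_simps)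
      also have "\<bar>\<dots>\<bar> \<le> \<bar>2 * ?d * ?e\<bar> + \<bar>6 * ?e * (f l ^ 5 - g l ^ 5)\<bar>"
        by (rule abs_triangle_ineq4)
      finally show ?thesis by (simp only: abs_mult abs_numeral)
    qed
    also have "\<dots> \<le> 2 * \<bar>?d\<bar> * \<bar>?e\<bar> + 6 * \<bar>?e\<bar> * (5 * B ^ 4 * \<bar>?d\<bar>)"
      by (intro add_left_mono mult_left_mono p5) auto
    also have "\<dots> = (1 + 15 * B ^ 4) * (2 * \<bar>?d\<bar> * \<bar>?e\<bar>)" by (simp add: algebra_simps)
    also have "\<dots> \<le> (1 + 15 * B ^ 4) * (?d ^ 2 + ?e ^ 2)"
    proof (rule mult_left_mono)
      have "0 \<le> (\<bar>?d\<bar> - \<bar>?e\<bar>) ^ 2" by simp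
      then show "2 * \<bar>?d\<bar> * \<bar>?e\<bar> \<le> ?d ^ 2 + ?e ^ 2"
        by (simp add: power2_eq_square algebra_simps)
    qed (simp add: zero_le_power)
    finally show ?thesis by (simp add: K_def w_def)
  qed
  have w_zero: "w t = 0"
  proof (cases "0 \<le> t")
    case True
    have "(\<lambda>l. w l * exp (- K * l)) t \<le> (\<lambda>l. w l * exp (- K * l)) 0"
    proof (rule DERIV_nonpos_imp_nonincreasing[OF True])
      fix x
      show "\<exists>y. ((\<lambda>l. w l * exp (- K * l)) has_real_derivative y) (at x) \<and> y \<le> 0"
      proof (intro exI conjI)
        show "((\<lambda>l. w l * exp (- K * l)) has_real_derivative (w' x - K * w x) * exp (- K * x)) (at x)"
          by (rule derivative_eq_intros wd refl)+ (simp add: algebra_simps)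
        show "(w' x - K * w x) * exp (- K * x) \<le> 0"
          using wb[of x] by (intro mult_nonpos_nonneg) auto
      qed
    qed
    then have "w t * exp (- K * t) \<le> 0" by (simp add: w0)
    then show ?thesis using wnn[of t] by (smt (verit) exp_gt_zero mult_pos_pos)
  next
    case False
    then have tl: "t \<le> 0" by simp
    have "(\<lambda>l. w l * exp (K * l)) t \<le> (\<lambda>l. w l * exp (K * l)) 0"
    proof (rule DERIV_nonneg_imp_nondecreasing[OF tl])
      fix x
      show "\<exists>y. ((\<lambda>l. w l * exp (K * l)) has_real_derivative y) (at x) \<and> y \<ge> 0"
      proof (intro exI conjI)
        show "((\<lambda>l. w l * exp (K * l)) has_real_derivative (w' x + K * w x) * exp (K * x)) (at x)"
          by (rule derivative_eq_intros wd refl)+ (simp add: algebra_simps)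
        show "(w' x + K * w x) * exp (K * x) \<ge> 0"
          using wb[of x] by (intro mult_nonneg_nonneg) auto
      qed
    qed
    then have "w t * exp (K * t) \<le> 0" by (simp add: w0)
    then show ?thesis using wnn[of t] by (smt (verit) exp_gt_zero mult_pos_pos)
  qed
  then show ?thesis unfolding w_def
    by (simp add: sum_power2_eq_zero_iff)
qed

definition NN :: "real \<Rightarrow> real" where "NN A = 2*A^2 + 2*A - 1"
definition QQ :: "real \<Rightarrow> real" where "QQ A = 1 + 8*A + 8*A^3 - 8*A^4"
definition PP :: "real \<Rightarrow> real" where "PP A = 4*A^4 - 4*A^3 + 6*A^2 + 2*A + 1"
definition TT :: "real \<Rightarrow> real" where "TT A = 4*A^2 - 2*A + 1"

lemma QQ_ge1: assumes "0 \<le> A" "A \<le> 1" shows "QQ A \<ge> 1"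
proof -
  have "A^3 \<le> 1" using assms by (simp add: power_le_one)
  then have "0 \<le> A * (1 - A^3)" using assms by simp
  moreover have "0 \<le> A^3" using assms by simp
  ultimately show ?thesis unfolding QQ_def by (simp add: algebra_simps power_def)
qed

lemma PP_pos: assumes "0 \<le> A" "A \<le> 1" shows "PP A > 0"
proof -
  have "A^3 \<le> A^2" using assms by (simp add: power_decreasing)
  moreover have "0 \<le> A^4" "0 \<le> A^2" using assms by simp_all
  ultimately show ?thesis unfolding PP_def using assms by linarith
qed

lemma TT_pos: "TT A > 0"
proof -
  have "0 \<le> (2*A - 1/2)^2" by simp
  then show ?thesis unfolding TT_def by (simp add: power2_eq_square algebra_simps)
qed

lemma powr_three_halves: assumes "0 < p" shows "p powr (3/2) = p * sqrt p"
proof -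
  have "p powr (3/2) = p powr (1 + 1/2)" by simp
  also have "\<dots> = p powr 1 * p powr (1/2)" by (simp only: powr_add)
  also have "\<dots> = p * sqrt p" using assms by (simp add: powr_half_sqrt)
  finally show ?thesis .
qed

lemma sqrt3_sq: "sqrt 3 * (sqrt 3 * x) = 3 * x"
  by (simp add: mult.assoc[symmetric])

lemma poly1: "QQ A^2 + NN A^2 * QQ A + NN A^4 = 3 * PP A^2"
  unfolding QQ_def NN_def PP_def by algebra

lemma poly2: "QQ A + 2 * NN A ^ 2 = 3 * (1 + 8 * A^3)"
  unfolding QQ_def NN_def by algebra

lemma poly3: "NN A^2 - QQ A + 3 * PP A + 3 * NN A * TT A = 6 * A * (1 + 8 * A^3)"
  unfolding QQ_def NN_def PP_def TT_def by algebra

lemma half_formula: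
  fixes A c :: real
  assumes A0: "0 \<le> A" and A1: "A \<le> 1" and c: "c = NN A / sqrt (QQ A)"
  shows "A = (c\<^sup>2 - 1) / (4 * c\<^sup>2 + 2)
     + sqrt 3 * sqrt (1 + c\<^sup>2 + c ^ 4) / (2 * sqrt (1 + 4 * c\<^sup>2 + 4 * c ^ 4))
     + sqrt 3 * c * sqrt (- 3 - 6 * c\<^sup>2 + 2 * sqrt 3 * (1 + 2 * c\<^sup>2) * sqrt (1 + c\<^sup>2 + c ^ 4))
       / (2 * (1 + 2 * c\<^sup>2) powr (3 / 2))"
proof -
  define q where "q = QQ A"
  define s where "s = sqrt q"
  define N where "N = NN A"
  define P where "P = PP A"
  define T where "T = TT A"
  define p where "p = 1 + 2 * c\<^sup>2"
  have q1: "q \<ge> 1" unfolding q_def using QQ_ge1[OF A0 A1] .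
  have s0: "s > 0" unfolding s_def using q1 by simp
  have ss: "s^2 = q" unfolding s_def using q1 by simp
  have P0: "P > 0" unfolding P_def using PP_pos[OF A0 A1] .
  have T0: "T > 0" unfolding T_def using TT_pos .
  have cN: "c = N / s" unfolding c N_def s_def q_def ..
  have c2: "c\<^sup>2 = N^2 / q" unfolding cN using ss by (simp add: power_divide)
  have c4: "c ^ 4 = (N^2 / q)^2" unfolding c2[symmetric] by simp
  have p0: "p > 0" unfolding p_def by (simp add: add_pos_nonneg)
  have pq: "p * q = 3 * (1 + 8 * A^3)"
    unfolding p_def c2 using q1 poly2[of A] by (simp add: field_simps N_def q_def)
  have e1: "sqrt (1 + c\<^sup>2 + c ^ 4) = sqrt 3 * P / q"
  proof (rule real_sqrt_unique)
    show "(sqrt 3 * P / q)\<^sup>2 = 1 + c\<^sup>2 + c ^ 4"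
    proof -
      have "(sqrt 3 * P / q)\<^sup>2 = 3 * P^2 / q^2" by (simp add: power_mult_distrib power_divide)
      also have "\<dots> = (q^2 + N^2 * q + N^4) / q^2" using poly1[of A] by (simp add: N_def P_def q_def)
      also have "\<dots> = 1 + N^2 / q + (N^2/q)^2" using q1 by (simp add: field_simps power2_eq_square power4_eq_xxxx)
      finally show ?thesis unfolding c2 c4 by simp
    qed
    show "0 \<le> sqrt 3 * P / q" using P0 q1 by simp
  qed
  have e2: "sqrt (1 + 4 * c\<^sup>2 + 4 * c ^ 4) = p"
  proof (rule real_sqrt_unique)
    show "p\<^sup>2 = 1 + 4 * c\<^sup>2 + 4 * c ^ 4" unfolding p_def by (simp add: algebra_simps power2_eq_square power4_eq_xxxx)
    show "0 \<le> p" using p0 by simp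
  qed
  have inner: "- 3 - 6 * c\<^sup>2 + 2 * sqrt 3 * (1 + 2 * c\<^sup>2) * sqrt (1 + c\<^sup>2 + c ^ 4)
       = 3 * p / q * T^2"
  proof -
    have "- 3 - 6 * c\<^sup>2 + 2 * sqrt 3 * (1 + 2 * c\<^sup>2) * sqrt (1 + c\<^sup>2 + c ^ 4)
        = - 3 * p + 2 * 3 * p * P / q"
      unfolding e1 p_def by (simp add: algebra_simps sqrt3_sq add_divide_distrib)
    also have "\<dots> = 3 * p / q * (2 * P - q)" using q1 by (simp add: field_simps)
    also have "2 * P - q = T^2" unfolding P_def PP_def q_def QQ_def T_def TT_def
      by (simp add: algebra_simps power2_eq_square power3_eq_cube power4_eq_xxxx)
    finally show ?thesis .
  qed
  have e3: "sqrt (- 3 - 6 * c\<^sup>2 + 2 * sqrt 3 * (1 + 2 * c\<^sup>2) * sqrt (1 + c\<^sup>2 + c ^ 4))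
      = sqrt 3 * sqrt p / s * T"
    unfolding inner s_def using T0 p0 q1 by (simp add: real_sqrt_mult real_sqrt_divide)
  have e4: "(1 + 2 * c\<^sup>2) powr (3 / 2) = p * sqrt p"
    unfolding p_def[symmetric] using p0 by (rule powr_three_halves)
  have sp: "sqrt p > 0" using p0 by simp
  have "(c\<^sup>2 - 1) / (4 * c\<^sup>2 + 2)
     + sqrt 3 * sqrt (1 + c\<^sup>2 + c ^ 4) / (2 * sqrt (1 + 4 * c\<^sup>2 + 4 * c ^ 4))
     + sqrt 3 * c * sqrt (- 3 - 6 * c\<^sup>2 + 2 * sqrt 3 * (1 + 2 * c\<^sup>2) * sqrt (1 + c\<^sup>2 + c ^ 4))
       / (2 * (1 + 2 * c\<^sup>2) powr (3 / 2))
     = (c\<^sup>2 - 1) / (2 * p) + sqrt 3 * (sqrt 3 * P / q) / (2 * p)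
       + sqrt 3 * c * (sqrt 3 * sqrt p / s * T) / (2 * (p * sqrt p))"
  proof -
    have f: "4 * c\<^sup>2 + 2 = 2 * p" unfolding p_def by simp
    show ?thesis unfolding e3 unfolding e4 unfolding e1 e2 f p_def[symmetric] ..
  qed
  also have "\<dots> = (c\<^sup>2 - 1) / (2 * p) + 3 * P / (2 * p * q) + 3 * c * T / (2 * p * s)"
    using p0 q1 s0 sp by (simp add: field_simps sqrt3_sq)
  also have "\<dots> = (N^2 - q + 3 * P + 3 * N * T) / (2 * (p * q))"
    unfolding c2 cN using p0 q1 s0 ss by (simp add: field_simps power2_eq_square)
  also have "\<dots> = A"
  proof -
    have h: "N^2 - q + 3 * P + 3 * N * T = 6 * A * (1 + 8 * A^3)"
      using poly3[of A] by (simp add: N_def q_def P_def T_def)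
    have "0 < 1 + 8 * A^3" using A0 by (simp add: add_pos_nonneg)
    then show ?thesis unfolding pq h by (simp add: field_simps)
  qed
  finally show ?thesis by simp
qed

definition PPd :: "real \<Rightarrow> real" where "PPd A = 16*A^3 - 12*A^2 + 12*A + 2"
definition QQd :: "real \<Rightarrow> real" where "QQd A = 8 + 24*A^2 - 32*A^3"

lemma poly4: "(4 * A + 2) * QQ A - NN A * QQd A / 2 = 6 * PP A"
  unfolding QQ_def NN_def PP_def QQd_def by algebra

lemma poly5: "(3 * (1 - 4 * A^3) * PP A + 6 * A * (1 - A^3) * PPd A) * QQ A
   - 9 * A * (1 - A^3) * PP A * QQd A = - 3 * NN A ^ 5"
  unfolding QQ_def NN_def PP_def QQd_def PPd_def by algebra

lemma dup_deriv:
  fixes a b :: "real \<Rightarrow> real"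
  assumes da: "\<And>t. (a has_real_derivative b t / 2) (at t)"
    and db: "\<And>t. (b has_real_derivative - 3 * a t ^ 5 / 2) (at t)"
    and en: "\<And>t. b t ^ 2 + a t ^ 6 = 1"
  defines "w \<equiv> \<lambda>t. NN (a t ^ 2) / sqrt (QQ (a t ^ 2))"
    and "w' \<equiv> \<lambda>t. 6 * (a t * b t) * PP (a t ^ 2) / sqrt (QQ (a t ^ 2)) ^ 3"
  shows "(w has_real_derivative w' t) (at t)"
    and "(w' has_real_derivative - 3 * w t ^ 5) (at t)"
proof -
  define A where "A t = a t ^ 2" for t
  define X where "X t = a t * b t" for t
  define s where "s t = sqrt (QQ (A t))" for t
  define NA where "NA t = NN (A t)" for t
  define PA where "PA t = PP (A t)" for t
  have A01: "0 \<le> A t \<and> A t \<le> 1" for t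
  proof -
    have "a t ^ 6 \<le> 1" using en[of t] by (smt (verit) zero_le_power2)
    then have "(a t ^ 2) ^ 3 \<le> 1" by (simp add: power_mult[symmetric])
    then have "a t ^ 2 \<le> 1" using power_le_one_iff[OF zero_le_power2[of "a t"], of 3] by simp
    then show ?thesis unfolding A_def by simp
  qed
  have Q1: "QQ (A t) \<ge> 1" for t using QQ_ge1 A01 by blast
  have s0: "s t > 0" for t unfolding s_def using Q1[of t] by simp
  have ss: "s t ^ 2 = QQ (A t)" for t unfolding s_def using Q1[of t] by simp
  have dA: "(A has_real_derivative X t) (at t)" for t
    unfolding A_def[abs_def] X_def
    by (rule derivative_eq_intros da refl)+ simp
  have dX: "(X has_real_derivative (1 - 4 * A t ^ 3) / 2) (at t)" for t
  proof -
    have "(X has_real_derivative (b t / 2 * b t + a t * (- 3 * a t ^ 5 / 2))) (at t)"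
      unfolding X_def[abs_def] by (rule derivative_eq_intros da db refl)+ (simp add: algebra_simps)
    moreover have "b t / 2 * b t + a t * (- 3 * a t ^ 5 / 2) = (1 - 4 * A t ^ 3) / 2"
    proof -
      have "b t ^ 2 = 1 - a t ^ 6" using en[of t] by simp
      then show ?thesis unfolding A_def
        by (simp add: field_simps power2_eq_square power_mult[symmetric]) (simp add: power_def)
    qed
    ultimately show ?thesis by metis
  qed
  have dNA: "(NA has_real_derivative (4 * A t + 2) * X t) (at t)" for t
    unfolding NA_def[abs_def] NN_def
    by (rule derivative_eq_intros dA refl)+ (simp add: algebra_simps)
  have dPA: "(PA has_real_derivative PPd (A t) * X t) (at t)" for t
    unfolding PA_def[abs_def] PP_def PPd_def
    by (rule derivative_eq_intros dA refl)+ (simp add: algebra_simps)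
  have dQA: "((\<lambda>t. QQ (A t)) has_real_derivative QQd (A t) * X t) (at t)" for t
    unfolding QQ_def QQd_def
    by (rule derivative_eq_intros dA refl)+ (simp add: algebra_simps)
  have ds: "(s has_real_derivative QQd (A t) * X t / (2 * s t)) (at t)" for t
  proof -
    have "(s has_real_derivative inverse (sqrt (QQ (A t))) / 2 * (QQd (A t) * X t)) (at t)"
      unfolding s_def[abs_def]
      by (rule DERIV_chain2[OF DERIV_real_sqrt dQA]) (use Q1[of t] in simp)
    then show ?thesis by (simp add: s_def field_simps)
  qed
  have wA: "w = (\<lambda>t. NA t / s t)" unfolding w_def NA_def s_def A_def ..
  have wA': "w' = (\<lambda>t. 6 * X t * PA t / s t ^ 3)" unfolding w'_def X_def PA_def s_def A_def ..
  show "(w has_real_derivative w' t) (at t)"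
  proof -
    have "(w has_real_derivative
        ((4 * A t + 2) * X t * s t - NA t * (QQd (A t) * X t / (2 * s t))) / (s t * s t)) (at t)"
      unfolding wA by (rule DERIV_divide dNA ds)+ (use s0[of t] in simp)
    moreover have "((4 * A t + 2) * X t * s t - NA t * (QQd (A t) * X t / (2 * s t))) / (s t * s t)
       = w' t"
    proof -
      have "((4 * A t + 2) * X t * s t - NA t * (QQd (A t) * X t / (2 * s t))) / (s t * s t)
          = X t * ((4 * A t + 2) * s t ^ 2 - NA t * QQd (A t) / 2) / s t ^ 3"
        using s0[of t] by (simp add: field_simps power2_eq_square power3_eq_cube)
      also have "\<dots> = X t * (6 * PA t) / s t ^ 3"
        unfolding ss NA_def PA_def poly4 ..
      finally show ?thesis unfolding wA' by simp
    qed
    ultimately show ?thesis by metis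
  qed
  show "(w' has_real_derivative - 3 * w t ^ 5) (at t)"
  proof -
    have XX: "X t ^ 2 = A t * (1 - A t ^ 3)"
    proof -
      have "b t ^ 2 = 1 - a t ^ 6" using en[of t] by simp
      then show ?thesis unfolding X_def A_def
        by (simp add: power_mult_distrib power_mult[symmetric])
    qed
    have "(w' has_real_derivative
       ((6 * ((1 - 4 * A t ^ 3) / 2) * PA t + 6 * X t * (PPd (A t) * X t)) * s t ^ 3
         - 6 * X t * PA t * (3 * s t ^ 2 * (QQd (A t) * X t / (2 * s t)))) / (s t ^ 3 * s t ^ 3)) (at t)"
      unfolding wA'
      by (rule derivative_eq_intros dX dPA ds refl)+ (use s0[of t] in \<open>simp_all add: algebra_simps\<close>)
    moreover have "((6 * ((1 - 4 * A t ^ 3) / 2) * PA t + 6 * X t * (PPd (A t) * X t)) * s t ^ 3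
         - 6 * X t * PA t * (3 * s t ^ 2 * (QQd (A t) * X t / (2 * s t)))) / (s t ^ 3 * s t ^ 3)
       = - 3 * w t ^ 5"
    proof -
      have "((6 * ((1 - 4 * A t ^ 3) / 2) * PA t + 6 * X t * (PPd (A t) * X t)) * s t ^ 3
         - 6 * X t * PA t * (3 * s t ^ 2 * (QQd (A t) * X t / (2 * s t)))) / (s t ^ 3 * s t ^ 3)
        = ((3 * (1 - 4 * A t ^ 3) * PA t + 6 * X t ^ 2 * PPd (A t)) * s t ^ 2
           - 9 * X t ^ 2 * PA t * QQd (A t)) / s t ^ 5"
        using s0[of t] by (simp add: field_simps power2_eq_square power3_eq_cube) (simp add: algebra_simps power_def)
      also have "\<dots> = - 3 * NA t ^ 5 / s t ^ 5"
      proof -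
        have num: "(3 * (1 - 4 * A t ^ 3) * PA t + 6 * X t ^ 2 * PPd (A t)) * s t ^ 2
           - 9 * X t ^ 2 * PA t * QQd (A t) = - 3 * NA t ^ 5"
          unfolding ss XX NA_def PA_def using poly5[of "A t"] by (simp add: algebra_simps)
        show ?thesis by (simp only: num)
      qed
      also have "\<dots> = - 3 * w t ^ 5" unfolding wA by (simp add: power_divide)
      finally show ?thesis .
    qed
    ultimately show ?thesis by metis
  qed
qed

definition clip :: "real \<Rightarrow> real" where "clip x = max (-1) (min 1 x)"
definition gf :: "real \<Rightarrow> real" where "gf x = - 3 * clip x ^ 5"

lemma clip_lip: "\<bar>clip x - clip y\<bar> \<le> \<bar>x - y\<bar>"
  by (auto simp: clip_def max_def min_def)

lemma clip_bound: "\<bar>clip x\<bar> \<le> 1"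
  by (auto simp: clip_def max_def min_def)

lemma clip_id: "\<bar>x\<bar> \<le> 1 \<Longrightarrow> clip x = x"
  by (auto simp: clip_def max_def min_def)

lemma gf_lip: "\<bar>gf x - gf y\<bar> \<le> 15 * \<bar>x - y\<bar>"
proof -
  have "gf x - gf y = 3 * (clip y ^ 5 - clip x ^ 5)" by (simp add: gf_def algebra_simps)
  then have "\<bar>gf x - gf y\<bar> = 3 * \<bar>clip y ^ 5 - clip x ^ 5\<bar>"
    by (simp only: abs_mult abs_numeral)
  then have "\<bar>gf x - gf y\<bar> = 3 * \<bar>clip x ^ 5 - clip y ^ 5\<bar>"
    by (simp only: abs_minus_commute)
  also have "\<dots> \<le> 3 * (5 * 1 ^ 4 * \<bar>clip x - clip y\<bar>)"
    by (intro mult_left_mono pow5_diff_bound clip_bound) auto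
  also have "\<dots> \<le> 15 * \<bar>x - y\<bar>" using clip_lip[of x y] by simp
  finally show ?thesis .
qed

lemma gf_cont: "continuous_on S gf"
  unfolding gf_def clip_def by (intro continuous_intros)

primrec pic :: "nat \<Rightarrow> (real \<Rightarrow> real) \<times> (real \<Rightarrow> real)" where
  "pic 0 = (\<lambda>t. 1, \<lambda>t. 0)"
| "pic (Suc n) = (\<lambda>t. 1 + integral {0..t} (snd (pic n)),
                  \<lambda>t. integral {0..t} (\<lambda>s. gf (fst (pic n) s)))"

definition PX :: "nat \<Rightarrow> real \<Rightarrow> real" where "PX n = fst (pic n)"
definition PY :: "nat \<Rightarrow> real \<Rightarrow> real" where "PY n = snd (pic n)"

lemma PX_0: "PX 0 t = 1" and PY_0: "PY 0 t = 0"
  by (simp_all add: PX_def PY_def)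

lemma PX_0': "PX 0 = (\<lambda>t. 1)" and PY_0': "PY 0 = (\<lambda>t. 0)"
  by (simp_all add: PX_def PY_def)

lemma PX_Suc: "PX (Suc n) t = 1 + integral {0..t} (PY n)"
  and PY_Suc: "PY (Suc n) t = integral {0..t} (\<lambda>s. gf (PX n s))"
  by (simp_all add: PX_def PY_def)

lemma pic_cont: "continuous_on {0..b} (PX n) \<and> continuous_on {0..b} (PY n)"
proof (induction n arbitrary: b)
  case 0
  then show ?case by (simp add: PX_def PY_def continuous_on_const)
next
  case (Suc n)
  have c1: "continuous_on {0..b} (PY n)" using Suc by blast
  have c2: "continuous_on {0..b} (\<lambda>s. gf (PX n s))"
    using Suc continuous_on_compose2[OF gf_cont[of UNIV], of "{0..b}" "PX n"] by auto
  have "continuous_on {0..b} (\<lambda>t. 1 + integral {0..t} (PY n))"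
    by (intro continuous_intros indefinite_integral_continuous_1 integrable_continuous_interval c1)
  moreover have "continuous_on {0..b} (\<lambda>t. integral {0..t} (\<lambda>s. gf (PX n s)))"
    by (intro indefinite_integral_continuous_1 integrable_continuous_interval c2)
  ultimately show ?case by (simp add: PX_Suc[abs_def] PY_Suc[abs_def])
qed

lemma PX_int: "PX n integrable_on {0..t}" and PY_int: "PY n integrable_on {0..t}"
  and PG_int: "(\<lambda>s. gf (PX n s)) integrable_on {0..t}"
proof -
  show "PX n integrable_on {0..t}" using pic_cont by (intro integrable_continuous_interval) blast
  show "PY n integrable_on {0..t}" using pic_cont by (intro integrable_continuous_interval) blast
  show "(\<lambda>s. gf (PX n s)) integrable_on {0..t}"
    using pic_cont[of t n] continuous_on_compose2[OF gf_cont[of UNIV], of "{0..t}" "PX n"]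
    by (intro integrable_continuous_interval) auto
qed

definition KK :: "nat \<Rightarrow> real \<Rightarrow> real" where
  "KK n t = 3 * 16 ^ n * t ^ Suc n / fact (Suc n)"

lemma KK_nonneg: "0 \<le> t \<Longrightarrow> 0 \<le> KK n t"
  by (simp add: KK_def)

lemma KK_mono: "0 \<le> t \<Longrightarrow> t \<le> b \<Longrightarrow> KK n t \<le> KK n b"
  unfolding KK_def by (intro divide_right_mono mult_left_mono power_mono) auto

lemma KK_cont: "continuous_on S (KK n)"
  unfolding KK_def[abs_def] by (intro continuous_intros) auto

lemma KK_integral:
  assumes "0 \<le> t"
  shows "(KK n has_integral KK (Suc n) t / 16) {0..t}"
proof -
  have "(KK n has_integral (KK (Suc n) t / 16 - KK (Suc n) 0 / 16)) {0..t}"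
  proof (rule fundamental_theorem_of_calculus[OF assms])
    fix x assume "x \<in> {0..t}"
    have "((\<lambda>x. KK (Suc n) x / 16) has_real_derivative KK n x) (at x)"
    proof -
      have "((\<lambda>x. x ^ Suc (Suc n)) has_real_derivative real (Suc (Suc n)) * x ^ Suc n) (at x)"
        using DERIV_pow[of "Suc (Suc n)" x] by simp
      then have "((\<lambda>x. 3 * 16 ^ Suc n / fact (Suc (Suc n)) / 16 * x ^ Suc (Suc n)) has_real_derivative
          3 * 16 ^ Suc n / fact (Suc (Suc n)) / 16 * (real (Suc (Suc n)) * x ^ Suc n)) (at x)"
        by (rule DERIV_cmult)
      moreover have "3 * 16 ^ Suc n / fact (Suc (Suc n)) / 16 * (real (Suc (Suc n)) * x ^ Suc n)
          = KK n x"
      proof -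
        have "fact (Suc (Suc n)) = real (Suc (Suc n)) * (fact (Suc n) :: real)" by simp
        then show ?thesis unfolding KK_def by (simp del: of_nat_Suc fact_Suc)
      qed
      moreover have "(\<lambda>x. KK (Suc n) x / 16) = (\<lambda>x. 3 * 16 ^ Suc n / fact (Suc (Suc n)) / 16 * x ^ Suc (Suc n))"
        unfolding KK_def by (simp add: field_simps)
      ultimately show ?thesis by metis
    qed
    then show "((\<lambda>x. KK (Suc n) x / 16) has_vector_derivative KK n x) (at x within {0..t})"
      by (simp add: has_real_derivative_iff_has_vector_derivative[symmetric] has_field_derivative_at_within)
  qed
  then show ?thesis by (simp add: KK_def)
qed

lemma pic_bound:
  assumes "0 \<le> t"
  shows "\<bar>PX (Suc n) t - PX n t\<bar> \<le> KK n t \<and> \<bar>PY (Suc n) t - PY n t\<bar> \<le> KK n t"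
  using assms
proof (induction n arbitrary: t)
  case 0
  then show ?case by (simp add: PX_Suc PY_Suc PX_0 PY_0 PX_0' PY_0' KK_def gf_def clip_def)
next
  case (Suc n)
  have KKi: "KK n integrable_on {0..t}" using KK_integral[OF Suc.prems] by blast
  have KKv: "integral {0..t} (KK n) = KK (Suc n) t / 16"
    using KK_integral[OF Suc.prems] by (rule integral_unique)
  have "\<bar>PX (Suc (Suc n)) t - PX (Suc n) t\<bar> = norm (integral {0..t} (\<lambda>s. PY (Suc n) s - PY n s))"
    by (simp add: PX_Suc integral_diff[OF PY_int PY_int])
  also have "\<dots> \<le> integral {0..t} (KK n)"
    by (rule integral_norm_bound_integral) (use Suc.IH in \<open>auto intro!: integrable_diff PY_int KKi\<close>)
  also have "\<dots> \<le> KK (Suc n) t" unfolding KKv using KK_nonneg[OF Suc.prems, of "Suc n"] by simp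
  finally have 1: "\<bar>PX (Suc (Suc n)) t - PX (Suc n) t\<bar> \<le> KK (Suc n) t" .
  have "\<bar>PY (Suc (Suc n)) t - PY (Suc n) t\<bar> = norm (integral {0..t} (\<lambda>s. gf (PX (Suc n) s) - gf (PX n s)))"
    by (simp add: PY_Suc integral_diff[OF PG_int PG_int])
  also have "\<dots> \<le> integral {0..t} (\<lambda>s. 15 * KK n s)"
  proof (rule integral_norm_bound_integral)
    show "(\<lambda>s. gf (PX (Suc n) s) - gf (PX n s)) integrable_on {0..t}"
      by (intro integrable_diff PG_int)
    show "(\<lambda>s. 15 * KK n s) integrable_on {0..t}"
      using KK_cont[of "{0..t}" n] by (intro integrable_continuous_interval continuous_intros)
    fix s assume s: "s \<in> {0..t}"
    have "\<bar>gf (PX (Suc n) s) - gf (PX n s)\<bar> \<le> 15 * \<bar>PX (Suc n) s - PX n s\<bar>" by (rule gf_lip)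
    also have "\<dots> \<le> 15 * KK n s" using Suc.IH[of s] s by auto
    finally show "norm (gf (PX (Suc n) s) - gf (PX n s)) \<le> 15 * KK n s" by simp
  qed
  also have "\<dots> = 15 * (KK (Suc n) t / 16)" using KKv by simp
  also have "\<dots> \<le> KK (Suc n) t" using KK_nonneg[OF Suc.prems, of "Suc n"] by simp
  finally have 2: "\<bar>PY (Suc (Suc n)) t - PY (Suc n) t\<bar> \<le> KK (Suc n) t" .
  from 1 2 show ?case ..
qed

definition XL :: "real \<Rightarrow> real" where "XL t = 1 + (\<Sum>i. PX (Suc i) t - PX i t)"
definition YL :: "real \<Rightarrow> real" where "YL t = (\<Sum>i. PY (Suc i) t - PY i t)"

lemma KK_summable: "summable (\<lambda>i. KK i b)"
proof -
  have "summable (\<lambda>n. inverse (fact n) * (16 * b) ^ n)" by (rule summable_exp)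
  then have "summable (\<lambda>n. inverse (fact (Suc n)) * (16 * b) ^ Suc n)"
    by (subst summable_Suc_iff)
  then have "summable (\<lambda>n. 3 / 16 * (inverse (fact (Suc n)) * (16 * b) ^ Suc n))"
    by (rule summable_mult)
  moreover have "(\<lambda>n. 3 / 16 * (inverse (fact (Suc n)) * (16 * b) ^ Suc n)) = (\<lambda>i. KK i b)"
    unfolding KK_def by (rule ext) (simp add: power_mult_distrib field_simps del: fact_Suc)
  ultimately show ?thesis by metis
qed

lemma PX_tele: "1 + (\<Sum>i<n. PX (Suc i) x - PX i x) = PX n x"
  by (induction n) (auto simp: PX_0)

lemma PY_tele: "(\<Sum>i<n. PY (Suc i) x - PY i x) = PY n x"
  by (induction n) (auto simp: PY_0)

lemma ulX: "uniform_limit {0..b} PX XL sequentially"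
  and ulY: "uniform_limit {0..b} PY YL sequentially"
proof -
  have W: "uniform_limit {0..b} (\<lambda>n t. \<Sum>i<n. PX (Suc i) t - PX i t)
      (\<lambda>t. \<Sum>i. PX (Suc i) t - PX i t) sequentially"
  proof (rule Weierstrass_m_test[OF _ KK_summable])
    fix n and t :: real assume "t \<in> {0..b}"
    then show "norm (PX (Suc n) t - PX n t) \<le> KK n b"
      using pic_bound[of t n] KK_mono[of t b n] by auto
  qed
  have W2: "uniform_limit {0..b} (\<lambda>n t. 1 + (\<Sum>i<n. PX (Suc i) t - PX i t))
      (\<lambda>t. 1 + (\<Sum>i. PX (Suc i) t - PX i t)) sequentially"
    by (intro uniform_limit_add uniform_limit_const W)
  show "uniform_limit {0..b} PX XL sequentially"
    using W2 by (subst uniform_limit_cong'[where g = "\<lambda>n t. 1 + (\<Sum>i<n. PX (Suc i) t - PX i t)"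
          and i = "\<lambda>t. 1 + (\<Sum>i. PX (Suc i) t - PX i t)"])
      (auto simp: PX_tele XL_def)
  have V: "uniform_limit {0..b} (\<lambda>n t. \<Sum>i<n. PY (Suc i) t - PY i t)
      (\<lambda>t. \<Sum>i. PY (Suc i) t - PY i t) sequentially"
  proof (rule Weierstrass_m_test[OF _ KK_summable])
    fix n and t :: real assume "t \<in> {0..b}"
    then show "norm (PY (Suc n) t - PY n t) \<le> KK n b"
      using pic_bound[of t n] KK_mono[of t b n] by auto
  qed
  show "uniform_limit {0..b} PY YL sequentially"
    using V by (subst uniform_limit_cong'[where g = "\<lambda>n t. \<Sum>i<n. PY (Suc i) t - PY i t"
          and i = "\<lambda>t. \<Sum>i. PY (Suc i) t - PY i t"])
      (auto simp: PY_tele YL_def)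
qed

lemma XL_cont: "continuous_on {0..b} XL" and YL_cont: "continuous_on {0..b} YL"
  using uniform_limit_theorem[OF always_eventually ulX, of b]
    uniform_limit_theorem[OF always_eventually ulY, of b] pic_cont by auto

lemma GL_cont: "continuous_on {0..b} (\<lambda>s. gf (XL s))"
  using continuous_on_compose2[OF gf_cont[of UNIV] XL_cont] by auto

lemma ulG: "uniform_limit {0..b} (\<lambda>n s. gf (PX n s)) (\<lambda>s. gf (XL s)) sequentially"
proof (rule uniform_limitI)
  fix e :: real assume e: "e > 0"
  have "\<forall>\<^sub>F n in sequentially. \<forall>x\<in>{0..b}. dist (PX n x) (XL x) < e / 15"
    by (rule uniform_limitD[OF ulX]) (use e in simp)
  then show "\<forall>\<^sub>F n in sequentially. \<forall>x\<in>{0..b}. dist (gf (PX n x)) (gf (XL x)) < e"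
  proof (rule eventually_mono)
    fix n assume h: "\<forall>x\<in>{0..b}. dist (PX n x) (XL x) < e / 15"
    show "\<forall>x\<in>{0..b}. dist (gf (PX n x)) (gf (XL x)) < e"
    proof
      fix x assume "x \<in> {0..b}"
      then have "\<bar>PX n x - XL x\<bar> < e / 15" using h by (simp add: dist_real_def)
      moreover have "\<bar>gf (PX n x) - gf (XL x)\<bar> \<le> 15 * \<bar>PX n x - XL x\<bar>" by (rule gf_lip)
      ultimately show "dist (gf (PX n x)) (gf (XL x)) < e" by (simp add: dist_real_def)
    qed
  qed
qed

lemma XL_eq: "0 \<le> t \<Longrightarrow> XL t = 1 + integral {0..t} YL"
proof -
  assume t0: "0 \<le> t"
  obtain I J where IJ: "\<And>n. (PY n has_integral I n) {0..t}" "(YL has_integral J) {0..t}"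
      "I \<longlonglongrightarrow> J"
    using uniform_limit_integral[OF ulY[of t]] pic_cont by auto
  have "(\<lambda>n. PX n t) \<longlonglongrightarrow> XL t"
    by (rule tendsto_uniform_limitI[OF ulX[of t]]) (use t0 in simp)
  then have "(\<lambda>n. PX (Suc n) t) \<longlonglongrightarrow> XL t" by (rule LIMSEQ_Suc)
  moreover have "PX (Suc n) t = 1 + I n" for n
    using PX_Suc integral_unique[OF IJ(1)] by simp
  ultimately have "(\<lambda>n. 1 + I n) \<longlonglongrightarrow> XL t" by simp
  moreover have "(\<lambda>n. 1 + I n) \<longlonglongrightarrow> 1 + J" by (intro tendsto_add tendsto_const IJ(3))
  ultimately have "XL t = 1 + J" by (rule LIMSEQ_unique)
  then show ?thesis using integral_unique[OF IJ(2)] by simp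
qed

lemma YL_eq: "0 \<le> t \<Longrightarrow> YL t = integral {0..t} (\<lambda>s. gf (XL s))"
proof -
  assume t0: "0 \<le> t"
  have cg: "continuous_on {0..t} (\<lambda>s. gf (PX n s))" for n
    using continuous_on_compose2[OF gf_cont[of UNIV], of "{0..t}" "PX n"] pic_cont by auto
  obtain I J where IJ: "\<And>n. ((\<lambda>s. gf (PX n s)) has_integral I n) {0..t}"
      "((\<lambda>s. gf (XL s)) has_integral J) {0..t}" "I \<longlonglongrightarrow> J"
    using uniform_limit_integral[OF ulG[of t] cg] by auto
  have "(\<lambda>n. PY n t) \<longlonglongrightarrow> YL t"
    by (rule tendsto_uniform_limitI[OF ulY[of t]]) (use t0 in simp)
  then have "(\<lambda>n. PY (Suc n) t) \<longlonglongrightarrow> YL t" by (rule LIMSEQ_Suc)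
  moreover have "PY (Suc n) t = I n" for n
    using PY_Suc integral_unique[OF IJ(1)] by simp
  ultimately have "I \<longlonglongrightarrow> YL t" by simp
  then have "YL t = J" using IJ(3) by (rule LIMSEQ_unique)
  then show ?thesis using integral_unique[OF IJ(2)] by simp
qed

lemma XL_0: "XL 0 = 1" using XL_eq[of 0] by simp
lemma YL_0: "YL 0 = 0" using YL_eq[of 0] by simp

lemma within_Ici: "0 \<le> t \<Longrightarrow> at t within {0..t+1} = at (t::real) within {0..}"
  by (rule at_within_nhd[where S = "{..<t+1}"]) auto

lemma XL_deriv: assumes "0 \<le> t" shows "(XL has_real_derivative YL t) (at t within {0..})"
proof -
  have "((\<lambda>u. integral {0..u} YL + 1) has_vector_derivative YL t) (at t within {0..t+1})"
    unfolding has_vector_derivative_add_const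
    by (rule integral_has_vector_derivative[OF YL_cont]) (use assms in simp)
  then have "(XL has_vector_derivative YL t) (at t within {0..t+1})"
    by (rule has_vector_derivative_transform[rotated 2]) (use assms XL_eq in auto)
  then show ?thesis unfolding has_real_derivative_iff_has_vector_derivative within_Ici[OF assms] .
qed

lemma YL_deriv: assumes "0 \<le> t" shows "(YL has_real_derivative gf (XL t)) (at t within {0..})"
proof -
  have "((\<lambda>u. integral {0..u} (\<lambda>s. gf (XL s))) has_vector_derivative gf (XL t)) (at t within {0..t+1})"
    by (rule integral_has_vector_derivative[OF GL_cont]) (use assms in simp)
  then have "(YL has_vector_derivative gf (XL t)) (at t within {0..t+1})"
    by (rule has_vector_derivative_transform[rotated 2]) (use assms YL_eq in auto)
  then show ?thesis unfolding has_real_derivative_iff_has_vector_derivative within_Ici[OF assms] .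
qed

definition Phi :: "real \<Rightarrow> real" where
  "Phi x = (if x \<in> {-1..1} then x ^ 6 else 6 * sqrt (x ^ 2) - 5)"

lemma aux_e: "6 * (inverse y / 2 * (2 * x)) - 0 = 6 * x / (y::real)"
  by (cases "y = 0") (simp_all add: field_simps)

lemma Phi_deriv: "(Phi has_real_derivative 6 * clip x ^ 5) (at x)"
proof -
  let ?S = "{-1..1::real}" and ?T = "- {-1..1::real}"
  have cl: "closure ?S \<inter> closure ?T = {-1, 1}"
  proof -
    have "closure (- {-1..1::real}) = - {-1<..<1}" by (simp add: closure_complement)
    moreover have "closure {-1..1::real} = {-1..1}" by simp
    moreover have "{-1..1::real} \<inter> - {-1<..<1} = {-1, 1}" by auto
    ultimately show ?thesis by simp
  qed
  have "((\<lambda>x. if x \<in> ?S then x ^ 6 else 6 * sqrt (x ^ 2) - 5) has_vector_derivative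
      (if x \<in> ?S then 6 * x ^ 5 else 6 * x / sqrt (x ^ 2))) (at x within UNIV)"
  proof (rule has_vector_derivative_If_within_closures)
    show "x \<in> ?S \<union> ?T" by auto
    show "UNIV = ?S \<union> ?T" by auto
    show "((\<lambda>x. x ^ 6) has_vector_derivative 6 * x ^ 5) (at x within ?S \<union> (closure ?S \<inter> closure ?T))"
      unfolding has_real_derivative_iff_has_vector_derivative[symmetric]
      by (rule has_field_derivative_at_within) (auto intro!: derivative_eq_intros)
    assume x: "x \<in> ?T \<union> (closure ?S \<inter> closure ?T)"
    then have "x \<noteq> 0" unfolding cl by auto
    then have "x ^ 2 > 0" by simp
    then have x2: "x ^ 2 > 0" .
    have d: "((\<lambda>x. x ^ 2) has_real_derivative 2 * x) (at x)" by (auto intro!: derivative_eq_intros)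
    have "((\<lambda>x. sqrt (x ^ 2)) has_real_derivative inverse (sqrt (x ^ 2)) / 2 * (2 * x)) (at x)"
      by (rule DERIV_chain2[OF DERIV_real_sqrt[OF x2] d])
    then have d2: "((\<lambda>x. 6 * sqrt (x ^ 2) - 5) has_real_derivative 6 * (inverse (sqrt (x ^ 2)) / 2 * (2 * x)) - 0) (at x)"
      by (rule DERIV_diff[OF DERIV_cmult DERIV_const])
    have e: "6 * (inverse (sqrt (x ^ 2)) / 2 * (2 * x)) - 0 = 6 * x / sqrt (x ^ 2)"
      by (rule aux_e)
    from d2 have "((\<lambda>x. 6 * sqrt (x ^ 2) - 5) has_real_derivative 6 * x / sqrt (x ^ 2)) (at x)"
      unfolding e .
    then show "((\<lambda>x. 6 * sqrt (x ^ 2) - 5) has_vector_derivative 6 * x / sqrt (x ^ 2))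
        (at x within ?T \<union> (closure ?S \<inter> closure ?T))"
      unfolding has_real_derivative_iff_has_vector_derivative[symmetric]
      by (rule has_field_derivative_at_within)
  next
    assume "x \<in> closure ?S" "x \<in> closure ?T"
    then have "x \<in> {-1, 1}" using cl by blast
    then have "x = -1 \<or> x = 1" by simp
    then show "x ^ 6 = 6 * sqrt (x ^ 2) - 5" and "6 * x ^ 5 = 6 * x / sqrt (x ^ 2)" by auto
  qed
  moreover have "(if x \<in> ?S then 6 * x ^ 5 else 6 * x / sqrt (x ^ 2)) = 6 * clip x ^ 5"
  proof (cases "x \<in> {-1..1}")
    case True
    then show ?thesis using clip_id[of x] by auto
  next
    case False
    then have "x > 1 \<or> x < -1" by auto
    then show ?thesis
    proof
      assume x: "x > 1"
      then have "clip x = 1" by (simp add: clip_def)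
      moreover have "sqrt (x ^ 2) = x" using x by simp
      ultimately show ?thesis using x by simp
    next
      assume x: "x < -1"
      then have "clip x = -1" by (simp add: clip_def)
      moreover have "sqrt (x ^ 2) = - x" using x by (simp add: real_sqrt_abs)
      ultimately show ?thesis using x by simp
    qed
  qed
  ultimately have "((\<lambda>x. if x \<in> ?S then x ^ 6 else 6 * sqrt (x ^ 2) - 5) has_vector_derivative
      6 * clip x ^ 5) (at x)" by simp
  then show ?thesis
    unfolding has_real_derivative_iff_has_vector_derivative Phi_def[abs_def] .
qed


lemma XL_bound: assumes "0 \<le> t" shows "\<bar>XL t\<bar> \<le> 1"
proof -
  define E where "E u = YL u ^ 2 + Phi (XL u)" for u
  have "\<exists>c. \<forall>u\<in>{0::real..}. E u = c"
  proof (rule has_field_derivative_zero_constant)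
    show "convex {0::real..}" by (rule convex_real_interval)
    fix u :: real assume u: "u \<in> {0..}"
    have u0: "0 \<le> u" using u by simp
    have d1: "(YL has_real_derivative gf (XL u)) (at u within {0..})" by (rule YL_deriv[OF u0])
    have d2: "((\<lambda>u. Phi (XL u)) has_real_derivative 6 * clip (XL u) ^ 5 * YL u) (at u within {0..})"
      by (rule DERIV_chain'[OF XL_deriv[OF u0] Phi_deriv])
    have "(E has_real_derivative 2 * YL u * gf (XL u) + 6 * clip (XL u) ^ 5 * YL u) (at u within {0..})"
      unfolding E_def[abs_def]
      by (rule derivative_eq_intros d1 d2 refl)+ simp
    moreover have "2 * YL u * gf (XL u) + 6 * clip (XL u) ^ 5 * YL u = 0" by (simp add: gf_def)
    ultimately show "(E has_real_derivative 0) (at u within {0..})" by metis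
  qed
  then obtain c where c: "\<And>u. 0 \<le> u \<Longrightarrow> E u = c" by auto
  have "E 0 = 1" by (simp add: E_def XL_0 YL_0 Phi_def)
  then have "E t = 1" using c[of 0] c[OF assms] by simp
  then have P1: "Phi (XL t) \<le> 1" unfolding E_def by (smt (verit) zero_le_power2)
  show ?thesis
  proof (rule ccontr)
    assume "\<not> \<bar>XL t\<bar> \<le> 1"
    then have "Phi (XL t) = 6 * \<bar>XL t\<bar> - 5" by (auto simp: Phi_def real_sqrt_abs)
    with P1 \<open>\<not> \<bar>XL t\<bar> \<le> 1\<close> show False by simp
  qed
qed

lemma cl_sets: "{..<0} \<union> (closure {..<0} \<inter> closure {0..}) = {..0::real}"
   "{0..} \<union> (closure {..<0} \<inter> closure {0::real..}) = {0::real..}"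
   "closure {..<0::real} \<inter> closure {0..} = {0}"
  by auto

lemma uminus_atMost0: "uminus ` {..0::real} = {0..}"
  by (auto simp: image_iff intro!: bexI[where x = "- _"])

lemma refl_deriv:
  fixes F F' :: "real \<Rightarrow> real"
  assumes d: "\<And>t. 0 \<le> t \<Longrightarrow> (F has_real_derivative F' t) (at t within {0..})"
    and c: "F' 0 = 0 \<or> True"
  assumes l: "l \<le> 0"
  shows "((\<lambda>x. F (- x)) has_real_derivative - F' (- l)) (at l within {..0})"
proof -
  have "(F has_real_derivative F' (- l)) (at (- l) within (uminus ` {..0}))"
    unfolding uminus_atMost0 using d l by simp
  moreover have "(uminus has_real_derivative -1) (at l within {..0})"
    by (auto intro!: derivative_eq_intros)
  ultimately have "(F \<circ> uminus has_real_derivative F' (- l) * -1) (at l within {..0})"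
    by (rule DERIV_image_chain)
  then show ?thesis by (simp add: o_def)
qed

lemma glue_deriv:
  fixes F F' G G' :: "real \<Rightarrow> real"
  assumes dF: "\<And>x. x \<le> 0 \<Longrightarrow> (F has_real_derivative F' x) (at x within {..0})"
    and dG: "\<And>x. 0 \<le> x \<Longrightarrow> (G has_real_derivative G' x) (at x within {0..})"
    and e1: "F 0 = G 0" and e2: "F' 0 = G' 0"
  shows "((\<lambda>x. if x \<in> {..<0} then F x else G x) has_real_derivative
      (if l \<in> {..<0} then F' l else G' l)) (at l)"
proof -
  have "((\<lambda>x. if x \<in> {..<0} then F x else G x) has_vector_derivative
      (if l \<in> {..<0} then F' l else G' l)) (at l within UNIV)"
  proof (rule has_vector_derivative_If_within_closures)
    show "l \<in> {..<0} \<union> {0..}" by auto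
    show "UNIV = {..<0} \<union> {0::real..}" by auto
    show "(F has_vector_derivative F' l) (at l within {..<0} \<union> (closure {..<0} \<inter> closure {0..}))"
      if "l \<in> {..<0} \<union> (closure {..<0} \<inter> closure {0..})"
      using that dF unfolding cl_sets(1) has_real_derivative_iff_has_vector_derivative by simp
    show "(G has_vector_derivative G' l) (at l within {0..} \<union> (closure {..<0} \<inter> closure {0..}))"
      if "l \<in> {0..} \<union> (closure {..<0} \<inter> closure {0..})"
      using that dG unfolding cl_sets(2) has_real_derivative_iff_has_vector_derivative by simp
    show "F l = G l" if "l \<in> closure {..<0}" "l \<in> closure {0..}"
      using that e1 cl_sets(3) by auto
    show "F' l = G' l" if "l \<in> closure {..<0}" "l \<in> closure {0..}"
      using that e2 cl_sets(3) by auto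
  qed
  then show ?thesis unfolding has_real_derivative_iff_has_vector_derivative by simp
qed

lemma cleaf3_exists: "\<exists>r. is_cleaf 3 r"
proof -
  define r where "r x = (if x \<in> {..<0} then XL (- x) else XL x)" for x :: real
  define r' where "r' x = (if x \<in> {..<0} then - YL (- x) else YL x)" for x :: real
  have "(r has_real_derivative r' l) (at l)" for l
    unfolding r_def[abs_def] r'_def
    by (rule glue_deriv[OF refl_deriv[OF XL_deriv] XL_deriv]) (auto simp: YL_0)
  moreover have "(r' has_real_derivative - 3 * r l ^ 5) (at l)" for l
  proof -
    have "(r' has_real_derivative (if l \<in> {..<0} then - (- gf (XL (- l))) else gf (XL l))) (at l)"
      unfolding r'_def[abs_def]
      by (rule glue_deriv[OF refl_deriv[where F = "\<lambda>x. - YL x" and F' = "\<lambda>x. - gf (XL x)"] YL_deriv])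
         (auto intro!: derivative_eq_intros YL_deriv simp: YL_0)
    moreover have "(if l \<in> {..<0} then - (- gf (XL (- l))) else gf (XL l)) = - 3 * r l ^ 5"
      unfolding r_def gf_def using XL_bound[of "- l"] XL_bound[of l] by (auto simp: clip_id)
    ultimately show ?thesis by simp
  qed
  moreover have "r 0 = 1" "r' 0 = 0" by (simp_all add: r_def r'_def XL_0 YL_0)
  ultimately show ?thesis unfolding is_cleaf_def by auto
qed

lemma half_deriv: "((\<lambda>t. t/2) has_real_derivative 1/2) (at t)"
  by (auto intro!: derivative_eq_intros)



lemma is_cleaf3_iff: "is_cleaf 3 r \<longleftrightarrow> (\<exists>r'. (\<forall>l. (r has_real_derivative r' l) (at l)) \<and>
       (\<forall>l. (r' has_real_derivative (- 3 * r l ^ 5)) (at l)) \<and> r 0 = 1 \<and> r' 0 = 0)"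
  by (simp add: is_cleaf_def)

lemma cleaf3_unique: assumes "is_cleaf 3 r1" "is_cleaf 3 r2" shows "r1 = r2"
proof
  fix t
  from assms(1) obtain r1' where h1: "\<forall>l. (r1 has_real_derivative r1' l) (at l)"
     "\<forall>l. (r1' has_real_derivative (- 3 * r1 l ^ 5)) (at l)" "r1 0 = 1" "r1' 0 = 0"
    unfolding is_cleaf3_iff by blast
  from assms(2) obtain r2' where h2: "\<forall>l. (r2 has_real_derivative r2' l) (at l)"
     "\<forall>l. (r2' has_real_derivative (- 3 * r2 l ^ 5)) (at l)" "r2 0 = 1" "r2' 0 = 0"
    unfolding is_cleaf3_iff by blast
  show "r1 t = r2 t"
    by (rule ode3_unique[of r1 r1' r2 r2']) (use h1 h2 in auto)
qed

lemma cleaf3_is: "is_cleaf 3 (cleaf 3)"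
proof -
  have "\<exists>!r. is_cleaf 3 r" using cleaf3_exists cleaf3_unique by blast
  then show ?thesis unfolding cleaf_def by (rule theI')
qed

lemma cleaf3_dup: "cleaf 3 t = NN (cleaf 3 (t/2) ^ 2) / sqrt (QQ (cleaf 3 (t/2) ^ 2))
   \<and> 0 \<le> cleaf 3 (t/2) ^ 2 \<and> cleaf 3 (t/2) ^ 2 \<le> 1"
proof -
  obtain r' where h: "\<And>l. (cleaf 3 has_real_derivative r' l) (at l)"
     "\<And>l. (r' has_real_derivative (- 3 * cleaf 3 l ^ 5)) (at l)" "cleaf 3 0 = 1" "r' 0 = 0"
    using cleaf3_is unfolding is_cleaf3_iff by blast
  define a where "a t = cleaf 3 (t/2)" for t
  define b where "b t = r' (t/2)" for t
  have da: "(a has_real_derivative b t / 2) (at t)" for t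
  proof -
    have "((\<lambda>t. cleaf 3 (t/2)) has_real_derivative r' (t/2) * (1/2)) (at t)"
      by (rule DERIV_chain2[OF h(1) half_deriv])
    then show ?thesis by (simp add: a_def[abs_def] b_def)
  qed
  have db: "(b has_real_derivative - 3 * a t ^ 5 / 2) (at t)" for t
  proof -
    have "((\<lambda>t. r' (t/2)) has_real_derivative (- 3 * cleaf 3 (t/2) ^ 5) * (1/2)) (at t)"
      by (rule DERIV_chain2[OF h(2) half_deriv])
    then show ?thesis by (simp add: a_def b_def[abs_def])
  qed
  have en: "b t ^ 2 + a t ^ 6 = 1" for t
    using energy3[OF h(1) h(2), of "t/2"] h(3) h(4) by (simp add: a_def b_def)
  define w where "w = (\<lambda>t. NN (a t ^ 2) / sqrt (QQ (a t ^ 2)))"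
  define w' where "w' = (\<lambda>t. 6 * (a t * b t) * PP (a t ^ 2) / sqrt (QQ (a t ^ 2)) ^ 3)"
  have "is_cleaf 3 w"
    unfolding is_cleaf3_iff
  proof (intro exI conjI allI)
    show "(w has_real_derivative w' l) (at l)" for l
      unfolding w_def w'_def by (rule dup_deriv(1)[OF da db en])
    show "(w' has_real_derivative - 3 * w l ^ 5) (at l)" for l
      unfolding w_def w'_def by (rule dup_deriv(2)[OF da db en])
    show "w 0 = 1" unfolding w_def a_def using h(3) by (simp add: NN_def QQ_def)
    show "w' 0 = 0" unfolding w'_def b_def using h(4) by simp
  qed
  then have "w = cleaf 3" using cleaf3_is cleaf3_unique by blast
  then have e: "cleaf 3 t = w t" by simp
  have "a t ^ 6 \<le> 1" using en[of t] by (smt (verit) zero_le_power2)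
  then have "a t ^ 2 \<le> 1" using power_le_one_iff[OF zero_le_power2[of "a t"], of 3] by simp
  then show ?thesis unfolding e w_def a_def by simp
qed

theorem mainTheorem15:
  fixes l :: real
  defines "c \<equiv> cleaf 3 l"
  shows "(cleaf 3 (l / 2))\<^sup>2 =
     (c\<^sup>2 - 1) / (4 * c\<^sup>2 + 2)
     + sqrt 3 * sqrt (1 + c\<^sup>2 + c ^ 4) / (2 * sqrt (1 + 4 * c\<^sup>2 + 4 * c ^ 4))
     + sqrt 3 * c * sqrt (- 3 - 6 * c\<^sup>2 + 2 * sqrt 3 * (1 + 2 * c\<^sup>2) * sqrt (1 + c\<^sup>2 + c ^ 4))
       / (2 * (1 + 2 * c\<^sup>2) powr (3 / 2))"
  using cleaf3_dup[of l] unfolding c_def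
  by (intro half_formula) auto

end
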